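(* Let $A=(\Sigma,q,N,\delta)$ be a well-formed LQCA, and let $A'=(\Sigma,q,N,\delta')$ where $\delta'(w)=\delta(w)/\|\delta(w)\|$ for all $w\in\Sigma^{|N|}$. Then $U_{A'}=U_A$, and $\|\delta'(w)\|=1$ for all $w$.
   Context: A linear quantum cellular automaton (LQCA) is a tuple $A=(\Sigma,q,N,\delta)$ where $\Sigma$ is a finite nonempty set of states, $N=(a_1,\dots,a_r)$ is a strictly increasing sequence of integers, $\delta:\Sigma^r\to\mathbb C^\Sigma$ satisfies $\|\delta(w)\|>0$ for all $w$ (with the standard norm on $\mathbb C^\Sigma$), and $q\in\Sigma$ satisfies $[\delta(q,\dots,q)](x)=1$ if $x=q$ and $0$ otherwise. A configuration is a map $c:\mathbb Z\to\Sigma$ with $c_i\ne q$ for only finitely many $i$; $\mathcal C_A$ is the set of configurations. With $c_{i+N}=(c_{i+a_1},\dots,c_{i+a_r})$, the time evolution operator is $U_A(d,c)=\prod_{i\in\mathbb Z}[\delta(c_{i+N})](d_i)$ for $c,d\in\mathcal C_A$, viewed as a linear operator on $\ell_2(\mathcal C_A)$. $A$ is well-formed if $U_A$ preserves the $\ell_2$ norm. *)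

theory Defs
  imports "HOL-Analysis.Analysis" "HOL-Library.Groups_Big_Fun"
begin

text \<open>States: a finite (automatically nonempty) type 'a. Neighbourhood N: an int list.
  Local transition function delta: words (lists of length |N|) to vectors in C^Sigma.\<close>

definition vnorm :: "('a::finite \<Rightarrow> complex) \<Rightarrow> real" where
  "vnorm v = sqrt (\<Sum>x\<in>UNIV. (cmod (v x))\<^sup>2)"

definition lqca :: "'a::finite \<Rightarrow> int list \<Rightarrow> ('a list \<Rightarrow> 'a \<Rightarrow> complex) \<Rightarrow> bool" where
  "lqca q N \<delta> \<longleftrightarrow> sorted_wrt (<) N
     \<and> (\<forall>w. length w = length N \<longrightarrow> vnorm (\<delta> w) > 0)
     \<and> \<delta> (replicate (length N) q) = (\<lambda>x. if x = q then 1 else 0)"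

definition configs :: "'a \<Rightarrow> (int \<Rightarrow> 'a) set" where
  "configs q = {c. finite {i. c i \<noteq> q}}"

definition nbhd :: "int list \<Rightarrow> (int \<Rightarrow> 'a) \<Rightarrow> int \<Rightarrow> 'a list" where
  "nbhd N c i = map (\<lambda>a. c (i + a)) N"

text \<open>U_A(d,c) = prod over i in Z of delta(c_{i+N})(d_i); the infinite product of a
  function that is 1 for all but finitely many i (Prod_any).\<close>
definition evol :: "int list \<Rightarrow> ('a list \<Rightarrow> 'a \<Rightarrow> complex) \<Rightarrow> (int \<Rightarrow> 'a) \<Rightarrow> (int \<Rightarrow> 'a) \<Rightarrow> complex" where
  "evol N \<delta> d c = Prod_any (\<lambda>i. \<delta> (nbhd N c i) (d i))"

text \<open>Well-formed: U_A, acting on l2(C_A) by (U f)(d) = sum_c U(d,c) f(c), preserves the l2 norm.\<close>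
definition well_formed :: "'a::finite \<Rightarrow> int list \<Rightarrow> ('a list \<Rightarrow> 'a \<Rightarrow> complex) \<Rightarrow> bool" where
  "well_formed q N \<delta> \<longleftrightarrow> lqca q N \<delta> \<and>
     (\<forall>f :: (int \<Rightarrow> 'a) \<Rightarrow> complex. (\<lambda>c. (cmod (f c))\<^sup>2) summable_on configs q \<longrightarrow>
        (\<forall>d\<in>configs q. (\<lambda>c. evol N \<delta> d c * f c) summable_on configs q) \<and>
        ((\<lambda>d. (cmod (\<Sum>\<^sub>\<infinity>c\<in>configs q. evol N \<delta> d c * f c))\<^sup>2) has_sum
           (\<Sum>\<^sub>\<infinity>c\<in>configs q. (cmod (f c))\<^sup>2)) (configs q))"

end

theory Submission
  imports Defs
begin

lemma vnorm_sq: "(vnorm v)\<^sup>2 = (\<Sum>x\<in>UNIV. (cmod (v x))\<^sup>2)"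
  unfolding vnorm_def by (simp add: sum_nonneg)

lemma finite_S:
  assumes "c \<in> configs q"
  shows "finite {i. nbhd N c i \<noteq> replicate (length N) q}"
proof -
  have "{i. nbhd N c i \<noteq> replicate (length N) q} \<subseteq> (\<Union>a\<in>set N. (\<lambda>j. j - a) ` {j. c j \<noteq> q})"
  proof
    fix i assume "i \<in> {i. nbhd N c i \<noteq> replicate (length N) q}"
    then have ne: "map (\<lambda>a. c (i + a)) N \<noteq> map (\<lambda>_. q) N"
      by (simp add: nbhd_def map_replicate_const)
    have "\<exists>a\<in>set N. c (i + a) \<noteq> q"
    proof (rule ccontr)
      assume "\<not> (\<exists>a\<in>set N. c (i + a) \<noteq> q)"
      then have "map (\<lambda>a. c (i + a)) N = map (\<lambda>_. q) N" by (simp only: map_eq_conv) blast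
      then show False using ne by contradiction
    qed
    then obtain a where a: "a \<in> set N" "c (i + a) \<noteq> q" by blast
    have "i = (\<lambda>j. j - a) (i + a)" by simp
    moreover have "i + a \<in> {j. c j \<noteq> q}" using a by simp
    ultimately have "i \<in> (\<lambda>j. j - a) ` {j. c j \<noteq> q}" by (rule image_eqI)
    then show "i \<in> (\<Union>a\<in>set N. (\<lambda>j. j - a) ` {j. c j \<noteq> q})"
      using a(1) by (rule UN_I[rotated])
  qed
  moreover have "finite (\<Union>a\<in>set N. (\<lambda>j. j - a) ` {j. c j \<noteq> q})"
    using assms by (intro finite_UN_I finite_imageI) (auto simp: configs_def)
  ultimately show ?thesis by (rule finite_subset)
qed

lemma evol_expand:
  assumes "\<delta> (replicate (length N) q) q = 1"
    and "finite T" and "{i. nbhd N c i \<noteq> replicate (length N) q} \<subseteq> T"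
    and "{i. d i \<noteq> q} \<subseteq> T"
  shows "evol N \<delta> d c = (\<Prod>i\<in>T. \<delta> (nbhd N c i) (d i))"
  unfolding evol_def
proof (rule Prod_any.expand_superset[OF assms(2)])
  show "{a. \<delta> (nbhd N c a) (d a) \<noteq> 1} \<subseteq> T"
  proof
    fix i assume "i \<in> {a. \<delta> (nbhd N c a) (d a) \<noteq> 1}"
    then show "i \<in> T"
    proof (rule contrapos_pp)
      assume "i \<notin> T"
      then have "nbhd N c i = replicate (length N) q" "d i = q" using assms(3,4) by auto
      then show "i \<notin> {a. \<delta> (nbhd N c a) (d a) \<noteq> 1}" using assms(1) by simp
    qed
  qed
qed

theorem mainTheorem6:
  fixes q :: "'a::finite" and N :: "int list" and \<delta> :: "'a list \<Rightarrow> 'a \<Rightarrow> complex"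
  assumes "well_formed q N \<delta>"
  defines "\<delta>' \<equiv> (\<lambda>w x. \<delta> w x / complex_of_real (vnorm (\<delta> w)))"
  shows "(\<forall>d\<in>configs q. \<forall>c\<in>configs q. evol N \<delta>' d c = evol N \<delta> d c)
     \<and> (\<forall>w. length w = length N \<longrightarrow> vnorm (\<delta>' w) = 1)"
proof -
  define Q where "Q = replicate (length N) q"
  have lq: "lqca q N \<delta>" using assms(1) by (simp add: well_formed_def)
  have wf: "\<And>f :: (int \<Rightarrow> 'a) \<Rightarrow> complex. (\<lambda>c. (cmod (f c))\<^sup>2) summable_on configs q \<Longrightarrow>
        ((\<lambda>d. (cmod (\<Sum>\<^sub>\<infinity>c\<in>configs q. evol N \<delta> d c * f c))\<^sup>2) has_sum
           (\<Sum>\<^sub>\<infinity>c\<in>configs q. (cmod (f c))\<^sup>2)) (configs q)"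
    using assms(1) by (simp add: well_formed_def)
  have dQ: "\<delta> Q = (\<lambda>x. if x = q then 1 else 0)" using lq by (simp add: lqca_def Q_def)
  have pos: "\<And>w. length w = length N \<Longrightarrow> vnorm (\<delta> w) > 0" using lq by (simp add: lqca_def)
  have vQ: "vnorm (\<delta> Q) = 1"
  proof -
    have e: "(\<lambda>x. (cmod (\<delta> Q x))\<^sup>2) = (\<lambda>x. if x = q then 1 else (0::real))" by (auto simp: dQ)
    show ?thesis unfolding vnorm_def e by simp
  qed
  have dQq: "\<delta> Q q = 1" by (simp add: dQ)
  have lenb: "\<And>c i. length (nbhd N c i) = length N" by (simp add: nbhd_def)
  have F1: "(\<Prod>i\<in>{i. nbhd N c i \<noteq> Q}. vnorm (\<delta> (nbhd N c i))) = 1" if c: "c \<in> configs q" for c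
  proof -
    define S where "S = {i. nbhd N c i \<noteq> Q}"
    have finS: "finite S" unfolding S_def Q_def by (rule finite_S[OF c])
    define D where "D = {d. \<forall>i. i \<notin> S \<longrightarrow> d i = q}"
    define h where "h = (\<lambda>g i. if i \<in> S then g i else q)"
    have bij: "bij_betw h (PiE S (\<lambda>_. UNIV::'a set)) D"
    proof (rule bij_betw_byWitness[where f'="\<lambda>d. restrict d S"])
      show "\<forall>a\<in>PiE S (\<lambda>_. UNIV::'a set). restrict (h a) S = a"
        by (auto simp: h_def PiE_def extensional_def restrict_def)
      show "\<forall>a'\<in>D. h (restrict a' S) = a'"
        by (auto simp: h_def D_def restrict_def)
      show "h ` PiE S (\<lambda>_. UNIV::'a set) \<subseteq> D" by (auto simp: h_def D_def)
      show "(\<lambda>d. restrict d S) ` D \<subseteq> PiE S (\<lambda>_. UNIV::'a set)" by auto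
    qed
    have finD: "finite D"
    proof -
      have "finite (h ` PiE S (\<lambda>_. UNIV::'a set))" using finS by (intro finite_imageI finite_PiE) auto
      then show ?thesis using bij by (simp add: bij_betw_def)
    qed
    have Dconf: "D \<subseteq> configs q"
    proof
      fix d assume "d \<in> D"
      then have "{i. d i \<noteq> q} \<subseteq> S" by (auto simp: D_def)
      then show "d \<in> configs q" using finS by (auto simp: configs_def intro: finite_subset)
    qed
    have ev_D: "evol N \<delta> d c = (\<Prod>i\<in>S. \<delta> (nbhd N c i) (d i))" if "d \<in> D" for d
      by (rule evol_expand) (use that dQq finS in \<open>auto simp: D_def S_def Q_def\<close>)
    have ev_out: "evol N \<delta> d c = 0" if "d \<in> configs q - D" for d
    proof -
      from that obtain i where i: "i \<notin> S" "d i \<noteq> q" by (auto simp: D_def)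
      define T where "T = S \<union> {i. d i \<noteq> q}"
      have finT: "finite T" using that finS by (auto simp: T_def configs_def)
      have "evol N \<delta> d c = (\<Prod>i\<in>T. \<delta> (nbhd N c i) (d i))"
        by (rule evol_expand) (use dQq finT in \<open>auto simp: T_def S_def Q_def\<close>)
      also have "\<dots> = 0"
      proof (rule prod_zero[OF finT])
        have "nbhd N c i = Q" using i by (simp add: S_def)
        then have "\<delta> (nbhd N c i) (d i) = 0" using i by (simp add: dQ)
        then show "\<exists>a\<in>T. \<delta> (nbhd N c a) (d a) = 0" using i by (auto simp: T_def)
      qed
      finally show ?thesis .
    qed
    have hs1: "((\<lambda>d. (cmod (evol N \<delta> d c))\<^sup>2) has_sum (\<Sum>d\<in>D. (cmod (evol N \<delta> d c))\<^sup>2)) (configs q)"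
      by (rule has_sum_finite_neutralI[OF finD Dconf]) (auto simp: ev_out)
    have "(\<Sum>d\<in>D. (cmod (evol N \<delta> d c))\<^sup>2) = (\<Sum>g\<in>PiE S (\<lambda>_. UNIV::'a set). (cmod (evol N \<delta> (h g) c))\<^sup>2)"
      by (rule sum.reindex_bij_betw[OF bij, symmetric])
    also have "\<dots> = (\<Sum>g\<in>PiE S (\<lambda>_. UNIV::'a set). \<Prod>i\<in>S. (cmod (\<delta> (nbhd N c i) (g i)))\<^sup>2)"
    proof (rule sum.cong[OF refl])
      fix g assume g: "g \<in> PiE S (\<lambda>_. UNIV::'a set)"
      then have "h g \<in> D" using bij by (auto simp: bij_betw_def)
      then have "evol N \<delta> (h g) c = (\<Prod>i\<in>S. \<delta> (nbhd N c i) (h g i))" by (rule ev_D)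
      also have "\<dots> = (\<Prod>i\<in>S. \<delta> (nbhd N c i) (g i))" by (rule prod.cong) (auto simp: h_def)
      finally show "(cmod (evol N \<delta> (h g) c))\<^sup>2 = (\<Prod>i\<in>S. (cmod (\<delta> (nbhd N c i) (g i)))\<^sup>2)"
        by (simp add: prod_norm[symmetric] prod_power_distrib)
    qed
    also have "\<dots> = (\<Prod>i\<in>S. \<Sum>y\<in>UNIV. (cmod (\<delta> (nbhd N c i) y))\<^sup>2)"
      by (rule prod_sum_PiE[symmetric]) (use finS in auto)
    also have "\<dots> = (\<Prod>i\<in>S. (vnorm (\<delta> (nbhd N c i)))\<^sup>2)" by (simp add: vnorm_sq)
    also have "\<dots> = (\<Prod>i\<in>S. vnorm (\<delta> (nbhd N c i)))\<^sup>2" by (simp add: prod_power_distrib)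
    finally have hs1': "((\<lambda>d. (cmod (evol N \<delta> d c))\<^sup>2) has_sum (\<Prod>i\<in>S. vnorm (\<delta> (nbhd N c i)))\<^sup>2) (configs q)"
      using hs1 by simp
    define f :: "(int \<Rightarrow> 'a) \<Rightarrow> complex" where "f = (\<lambda>c'. if c' = c then 1 else 0)"
    have hsf: "((\<lambda>c'. (cmod (f c'))\<^sup>2) has_sum 1) (configs q)"
      by (rule has_sum_finite_neutralI[where B="{c}"]) (use c in \<open>auto simp: f_def\<close>)
    have inner: "(\<Sum>\<^sub>\<infinity>c'\<in>configs q. evol N \<delta> d c' * f c') = evol N \<delta> d c" for d
      by (rule infsumI, rule has_sum_finite_neutralI[where B="{c}"]) (use c in \<open>auto simp: f_def\<close>)
    have hs2: "((\<lambda>d. (cmod (evol N \<delta> d c))\<^sup>2) has_sum 1) (configs q)"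
      using wf[of f] hsf by (simp add: inner infsumI has_sum_imp_summable)
    have sq: "(\<Prod>i\<in>S. vnorm (\<delta> (nbhd N c i)))\<^sup>2 = 1" using has_sum_unique[OF hs1' hs2] .
    have nn: "(\<Prod>i\<in>S. vnorm (\<delta> (nbhd N c i))) \<ge> 0"
      by (rule prod_nonneg) (simp add: vnorm_def sum_nonneg)
    from sq nn show ?thesis unfolding S_def[symmetric] by (simp add: power2_eq_1_iff)
  qed
  have part1: "evol N \<delta>' d c = evol N \<delta> d c" if d: "d \<in> configs q" and c: "c \<in> configs q" for d c
  proof -
    define S where "S = {i. nbhd N c i \<noteq> Q}"
    have finS: "finite S" unfolding S_def Q_def by (rule finite_S[OF c])
    define T where "T = S \<union> {i. d i \<noteq> q}"
    have finT: "finite T" using d finS by (auto simp: T_def configs_def)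
    have d'Qq: "\<delta>' Q q = 1" by (simp add: \<delta>'_def dQq vQ)
    have "evol N \<delta>' d c = (\<Prod>i\<in>T. \<delta>' (nbhd N c i) (d i))"
      by (rule evol_expand) (use d'Qq finT in \<open>auto simp: T_def S_def Q_def\<close>)
    also have "\<dots> = (\<Prod>i\<in>T. \<delta> (nbhd N c i) (d i)) / (\<Prod>i\<in>T. complex_of_real (vnorm (\<delta> (nbhd N c i))))"
      by (simp add: \<delta>'_def prod_dividef)
    also have "(\<Prod>i\<in>T. complex_of_real (vnorm (\<delta> (nbhd N c i)))) = complex_of_real (\<Prod>i\<in>T. vnorm (\<delta> (nbhd N c i)))"
      by (simp add: of_real_prod)
    also have "(\<Prod>i\<in>T. vnorm (\<delta> (nbhd N c i))) = (\<Prod>i\<in>S. vnorm (\<delta> (nbhd N c i)))"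
      by (rule prod.mono_neutral_right[OF finT]) (auto simp: T_def S_def vQ)
    also have "\<dots> = 1" unfolding S_def by (rule F1[OF c])
    also have "(\<Prod>i\<in>T. \<delta> (nbhd N c i) (d i)) = evol N \<delta> d c"
      by (rule evol_expand[symmetric]) (use dQq finT in \<open>auto simp: T_def S_def Q_def\<close>)
    finally show ?thesis by simp
  qed
  have part2: "vnorm (\<delta>' w) = 1" if w: "length w = length N" for w
  proof -
    define v where "v = vnorm (\<delta> w)"
    have v: "v > 0" using pos[OF w] by (simp add: v_def)
    have "(\<Sum>x\<in>UNIV. (cmod (\<delta>' w x))\<^sup>2) = (\<Sum>x\<in>UNIV. (cmod (\<delta> w x))\<^sup>2) / v\<^sup>2"
      using v by (simp add: \<delta>'_def v_def[symmetric] norm_divide power_divide sum_divide_distrib)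
    also have "\<dots> = v\<^sup>2 / v\<^sup>2" by (simp add: v_def vnorm_sq)
    also have "\<dots> = 1" using v by simp
    finally show ?thesis by (simp add: vnorm_def)
  qed
  show ?thesis using part1 part2 by blast
qed

end
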